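(* In the standing setting, suppose $G$ is the series or parallel composition of SP digraphs $G_1$ and $G_2$, and suppose a robust $\boldsymbol b$-flow exists. Then there exists an optimal robust $\boldsymbol b$-flow $\boldsymbol f=(f^1,f^2)$ with $\delta(f^2|G_1)\ge\delta(f^1|G_1)$ and $\delta(f^2|G_2)\ge\delta(f^1|G_2)$.
   Context: A RobMCF instance $(G,u,c,\boldsymbol b)$ consists of a finite directed graph (parallel arcs allowed) $G=(V,A)$ whose arc set is partitioned as $A=A^{\mathrm{fix}}\cup A^{\mathrm{free}}$ into fixed and free arcs, capacities $u:A\to\mathbb Z_{\ge0}$, costs $c:A\to\mathbb Z_{\ge0}$, a finite nonempty set of scenarios $\Lambda$, and balances $b^\lambda:V\to\mathbb Z$ with $\sum_{v}b^\lambda(v)=0$. A $b^\lambda$-flow is a function $f^\lambda:A\to\mathbb Z_{\ge0}$ with $f^\lambda(a)\le u(a)$ for all $a$ and $\sum_{a=(v,w)\in A}f^\lambda(a)-\sum_{a=(w,v)\in A}f^\lambda(a)=b^\lambda(v)$ for all $v\in V$; its cost is $c(f^\lambda)=\sum_a c(a)f^\lambda(a)$. A robust $\boldsymbol b$-flow is a tuple $(f^\lambda)_{\lambda\in\Lambda}$ of $b^\lambda$-flows with $f^\lambda(a)=f^{\lambda'}(a)$ for all $a\in A^{\mathrm{fix}}$, $\lambda,\lambda'\in\Lambda$; its cost is $\max_\lambda c(f^\lambda)$; it is optimal if of minimum cost. Series-parallel (SP) digraphs are defined recursively: a single arc $(o,q)$ is an SP digraph with origin $o$ and target $q$; if $G_1$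 (origin $o_1$, target $q_1$) and $G_2$ (origin $o_2$, target $q_2$) are SP digraphs, then their series composition (identify $q_1$ with $o_2$; origin $o_1$, target $q_2$) and their parallel composition (identify $o_1$ with $o_2$ to form the origin and $q_1$ with $q_2$ to form the target) are SP digraphs. Standing setting: $G$ is an SP digraph with origin $o$ and target $q$, $\Lambda=\{1,2\}$, and there are integers $0\le d^1\le d^2$ with $b^\lambda(o)=d^\lambda$, $b^\lambda(q)=-d^\lambda$ and $b^\lambda(v)=0$ for all other $v$ (unique source $o$, unique sink $q$). For an SP subgraph $H$ of $G$ with origin $o_H$ and a flow $f^\lambda$, write $\delta(f^\lambda|H)=\sum_{a=(o_H,w)\in A(H)}f^\lambda(a)$ for the flow value entering $H$. *)

theory Defs
  imports Main
begin

text \<open>A digraph with parallel arcs: arcs of type 'a, each arc e has tail tail e and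
head head e. A (sub)graph is given by its finite arc set; its vertex set consists
of the endpoints of its arcs (SP digraphs have no isolated vertices).\<close>

definition verts :: "('a \<Rightarrow> 'v) \<Rightarrow> ('a \<Rightarrow> 'v) \<Rightarrow> 'a set \<Rightarrow> 'v set" where
  "verts tail head A = tail ` A \<union> head ` A"

definition series_comp ::
  "('a \<Rightarrow> 'v) \<Rightarrow> ('a \<Rightarrow> 'v) \<Rightarrow> 'a set \<Rightarrow> 'v \<Rightarrow> 'v \<Rightarrow> 'a set \<Rightarrow> 'v \<Rightarrow> 'v \<Rightarrow> bool" where
  "series_comp tail head A1 s1 t1 A2 s2 t2 \<longleftrightarrow>
     t1 = s2 \<and> A1 \<inter> A2 = {} \<and> verts tail head A1 \<inter> verts tail head A2 = {t1}"

definition parallel_comp ::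
  "('a \<Rightarrow> 'v) \<Rightarrow> ('a \<Rightarrow> 'v) \<Rightarrow> 'a set \<Rightarrow> 'v \<Rightarrow> 'v \<Rightarrow> 'a set \<Rightarrow> 'v \<Rightarrow> 'v \<Rightarrow> bool" where
  "parallel_comp tail head A1 s1 t1 A2 s2 t2 \<longleftrightarrow>
     s1 = s2 \<and> t1 = t2 \<and> A1 \<inter> A2 = {} \<and> verts tail head A1 \<inter> verts tail head A2 = {s1, t1}"

inductive sp :: "('a \<Rightarrow> 'v) \<Rightarrow> ('a \<Rightarrow> 'v) \<Rightarrow> 'a set \<Rightarrow> 'v \<Rightarrow> 'v \<Rightarrow> bool"
  for tail head where
  arc: "tail e = s \<Longrightarrow> head e = t \<Longrightarrow> s \<noteq> t \<Longrightarrow> sp tail head {e} s t"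
| ser: "sp tail head A1 s1 t1 \<Longrightarrow> sp tail head A2 s2 t2 \<Longrightarrow> series_comp tail head A1 s1 t1 A2 s2 t2
        \<Longrightarrow> sp tail head (A1 \<union> A2) s1 t2"
| par: "sp tail head A1 s1 t1 \<Longrightarrow> sp tail head A2 s2 t2 \<Longrightarrow> parallel_comp tail head A1 s1 t1 A2 s2 t2
        \<Longrightarrow> sp tail head (A1 \<union> A2) s1 t1"

definition st_balance :: "'v \<Rightarrow> 'v \<Rightarrow> nat \<Rightarrow> 'v \<Rightarrow> int" where
  "st_balance s t d v = (if v = s then int d else if v = t then - int d else 0)"

definition is_flow ::
  "('a \<Rightarrow> 'v) \<Rightarrow> ('a \<Rightarrow> 'v) \<Rightarrow> 'a set \<Rightarrow> ('a \<Rightarrow> nat) \<Rightarrow> ('v \<Rightarrow> int) \<Rightarrow> ('a \<Rightarrow> nat) \<Rightarrow> bool" where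
  "is_flow tail head A u b f \<longleftrightarrow>
     (\<forall>e\<in>A. f e \<le> u e) \<and>
     (\<forall>v\<in>verts tail head A.
        (\<Sum>e\<in>{e\<in>A. tail e = v}. int (f e)) - (\<Sum>e\<in>{e\<in>A. head e = v}. int (f e)) = b v)"

definition flow_cost :: "'a set \<Rightarrow> ('a \<Rightarrow> nat) \<Rightarrow> ('a \<Rightarrow> nat) \<Rightarrow> nat" where
  "flow_cost A c f = (\<Sum>e\<in>A. c e * f e)"

definition robust_flow ::
  "('a \<Rightarrow> 'v) \<Rightarrow> ('a \<Rightarrow> 'v) \<Rightarrow> 'a set \<Rightarrow> 'a set \<Rightarrow> ('a \<Rightarrow> nat) \<Rightarrow> 'v \<Rightarrow> 'v \<Rightarrow> nat \<Rightarrow> nat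
   \<Rightarrow> ('a \<Rightarrow> nat) \<Rightarrow> ('a \<Rightarrow> nat) \<Rightarrow> bool" where
  "robust_flow tail head A Afix u s t d1 d2 f1 f2 \<longleftrightarrow>
     is_flow tail head A u (st_balance s t d1) f1 \<and>
     is_flow tail head A u (st_balance s t d2) f2 \<and>
     (\<forall>e\<in>Afix. f1 e = f2 e)"

definition robust_cost :: "'a set \<Rightarrow> ('a \<Rightarrow> nat) \<Rightarrow> ('a \<Rightarrow> nat) \<Rightarrow> ('a \<Rightarrow> nat) \<Rightarrow> nat" where
  "robust_cost A c f1 f2 = max (flow_cost A c f1) (flow_cost A c f2)"

definition optimal_robust_flow ::
  "('a \<Rightarrow> 'v) \<Rightarrow> ('a \<Rightarrow> 'v) \<Rightarrow> 'a set \<Rightarrow> 'a set \<Rightarrow> ('a \<Rightarrow> nat) \<Rightarrow> ('a \<Rightarrow> nat) \<Rightarrow> 'v \<Rightarrow> 'v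
   \<Rightarrow> nat \<Rightarrow> nat \<Rightarrow> ('a \<Rightarrow> nat) \<Rightarrow> ('a \<Rightarrow> nat) \<Rightarrow> bool" where
  "optimal_robust_flow tail head A Afix u c s t d1 d2 f1 f2 \<longleftrightarrow>
     robust_flow tail head A Afix u s t d1 d2 f1 f2 \<and>
     (\<forall>g1 g2. robust_flow tail head A Afix u s t d1 d2 g1 g2 \<longrightarrow>
        robust_cost A c f1 f2 \<le> robust_cost A c g1 g2)"

definition delta :: "('a \<Rightarrow> 'v) \<Rightarrow> 'a set \<Rightarrow> 'v \<Rightarrow> ('a \<Rightarrow> nat) \<Rightarrow> nat" where
  "delta tail H sH f = (\<Sum>e\<in>{e\<in>H. tail e = sH}. f e)"

end

theory Submission
  imports Defs
begin


lemma sp_struct: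
  "sp ta he H s t \<Longrightarrow> finite H \<and> s \<noteq> t \<and> s \<in> verts ta he H \<and> t \<in> verts ta he H
     \<and> (\<forall>e\<in>H. he e \<noteq> s) \<and> (\<forall>e\<in>H. ta e \<noteq> t)"
proof (induction rule: sp.induct)
  case (arc e s t) then show ?case by (auto simp: verts_def)
next
  case (ser A1 s1 t1 A2 s2 t2)
  have I: "verts ta he A1 \<inter> verts ta he A2 = {t1}" "t1 = s2" using ser.hyps(3) by (auto simp: series_comp_def)
  have h1: "\<forall>e\<in>A2. he e \<noteq> s1"
  proof
    fix e assume "e \<in> A2"
    hence "he e \<in> verts ta he A2" by (auto simp: verts_def)
    moreover have "s1 \<in> verts ta he A1" using ser.IH by auto
    ultimately show "he e \<noteq> s1" using I ser.IH by auto
  qed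
  have h2: "\<forall>e\<in>A1. ta e \<noteq> t2"
  proof
    fix e assume "e \<in> A1"
    hence "ta e \<in> verts ta he A1" by (auto simp: verts_def)
    moreover have "t2 \<in> verts ta he A2" using ser.IH by auto
    ultimately show "ta e \<noteq> t2" using I ser.IH by auto
  qed
  have "s1 \<noteq> t2" using I ser.IH by auto
  then show ?case using ser.IH h1 h2 by (auto simp: verts_def)
next
  case (par A1 s1 t1 A2 s2 t2)
  have "s1 = s2" "t1 = t2" using par.hyps(3) by (auto simp: parallel_comp_def)
  then show ?case using par.IH by (auto simp: verts_def)
qed



definition fsum :: "('a \<Rightarrow> 'v) \<Rightarrow> 'a set \<Rightarrow> 'v \<Rightarrow> ('a \<Rightarrow> nat) \<Rightarrow> nat" where
  "fsum g H v f = (\<Sum>e\<in>{e\<in>H. g e = v}. f e)"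

definition cons :: "('a \<Rightarrow> 'v) \<Rightarrow> ('a \<Rightarrow> 'v) \<Rightarrow> 'a set \<Rightarrow> 'v \<Rightarrow> 'v \<Rightarrow> ('a \<Rightarrow> nat) \<Rightarrow> bool" where
  "cons ta he H s t f \<longleftrightarrow> (\<forall>v\<in>verts ta he H. v \<noteq> s \<longrightarrow> v \<noteq> t \<longrightarrow> fsum ta H v f = fsum he H v f)"

lemma fsum_union:
  assumes "finite H1" "finite H2" "H1 \<inter> H2 = {}"
  shows "fsum g (H1 \<union> H2) v f = fsum g H1 v f + fsum g H2 v f"
proof -
  have "{e\<in>H1 \<union> H2. g e = v} = {e\<in>H1. g e = v} \<union> {e\<in>H2. g e = v}" by auto
  then show ?thesis unfolding fsum_def using assms
    by (simp add: sum.union_disjoint disjoint_iff)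
qed

lemma fsum_tail_notin: "v \<notin> verts ta he H \<Longrightarrow> fsum ta H v f = 0"
  unfolding fsum_def verts_def by (rule sum.neutral) auto

lemma fsum_head_notin: "v \<notin> verts ta he H \<Longrightarrow> fsum he H v f = 0"
  unfolding fsum_def verts_def by (rule sum.neutral) auto

lemma fsum_empty: "\<forall>e\<in>H. g e \<noteq> v \<Longrightarrow> fsum g H v f = 0"
  unfolding fsum_def by (rule sum.neutral) auto

lemma fsum_cong: "(\<And>e. e \<in> H \<Longrightarrow> f e = f' e) \<Longrightarrow> fsum g H v f = fsum g H v f'"
  unfolding fsum_def by (rule sum.cong) auto

lemma fsum_lin: "(\<And>e. e \<in> H \<Longrightarrow> a e + b e = c e + d e) \<Longrightarrow>
   fsum g H v a + fsum g H v b = fsum g H v c + fsum g H v d"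
proof -
  assume h: "\<And>e. e \<in> H \<Longrightarrow> a e + b e = c e + d e"
  let ?S = "{e\<in>H. g e = v}"
  have "sum a ?S + sum b ?S = sum (\<lambda>e. a e + b e) ?S" by (simp add: sum.distrib)
  also have "\<dots> = sum (\<lambda>e. c e + d e) ?S" by (rule sum.cong) (auto simp: h)
  also have "\<dots> = sum c ?S + sum d ?S" by (simp add: sum.distrib)
  finally show ?thesis unfolding fsum_def .
qed

lemma cost_union:
  assumes "finite H1" "finite H2" "H1 \<inter> H2 = {}"
  shows "flow_cost (H1 \<union> H2) c f = flow_cost H1 c f + flow_cost H2 c f"
  unfolding flow_cost_def using assms by (simp add: sum.union_disjoint)

lemma cost_cong: "(\<And>e. e \<in> H \<Longrightarrow> f e = f' e) \<Longrightarrow> flow_cost H c f = flow_cost H c f'"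
  unfolding flow_cost_def by (rule sum.cong) auto

lemma cost_lin: "(\<And>e. e \<in> H \<Longrightarrow> a e + b e = p e + q e) \<Longrightarrow>
   flow_cost H c a + flow_cost H c b = flow_cost H c p + flow_cost H c q"
proof -
  assume h: "\<And>e. e \<in> H \<Longrightarrow> a e + b e = p e + q e"
  have "\<And>e. e \<in> H \<Longrightarrow> c e * a e + c e * b e = c e * p e + c e * q e"
    using h by (metis distrib_left)
  then have "sum (\<lambda>e. c e * a e + c e * b e) H = sum (\<lambda>e. c e * p e + c e * q e) H"
    by (rule sum.cong[OF refl])
  then show ?thesis unfolding flow_cost_def by (simp add: sum.distrib)
qed

lemma ser_facts:
  assumes H1: "sp ta he A1 s1 t1" and H2: "sp ta he A2 s2 t2"
    and sc: "series_comp ta he A1 s1 t1 A2 s2 t2"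
  shows "A1 \<inter> A2 = {}" "s2 = t1" "s1 \<notin> verts ta he A2" "t2 \<notin> verts ta he A1"
    "\<And>v. v \<in> verts ta he A1 \<Longrightarrow> v \<noteq> t1 \<Longrightarrow> v \<notin> verts ta he A2"
    "\<And>v. v \<in> verts ta he A2 \<Longrightarrow> v \<noteq> t1 \<Longrightarrow> v \<notin> verts ta he A1"
proof -
  have I: "verts ta he A1 \<inter> verts ta he A2 = {t1}" "t1 = s2" "A1 \<inter> A2 = {}"
    using sc unfolding series_comp_def by simp_all
  have S1: "s1 \<in> verts ta he A1" "s1 \<noteq> t1" using sp_struct[OF H1] by simp_all
  have S2: "t2 \<in> verts ta he A2" "s2 \<noteq> t2" using sp_struct[OF H2] by simp_all
  show "A1 \<inter> A2 = {}" "s2 = t1" using I by simp_all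
  show "s1 \<notin> verts ta he A2" using I(1) S1 by (metis IntI singletonD)
  show "t2 \<notin> verts ta he A1" using I(1,2) S2 by (metis IntI singletonD)
  show "\<And>v. v \<in> verts ta he A1 \<Longrightarrow> v \<noteq> t1 \<Longrightarrow> v \<notin> verts ta he A2" using I(1) by (metis IntI singletonD)
  show "\<And>v. v \<in> verts ta he A2 \<Longrightarrow> v \<noteq> t1 \<Longrightarrow> v \<notin> verts ta he A1" using I(1) by (metis IntI singletonD)
qed

lemma par_facts:
  assumes pc: "parallel_comp ta he A1 s t A2 s t"
  shows "A1 \<inter> A2 = {}"
    "\<And>v. v \<in> verts ta he A1 \<Longrightarrow> v \<noteq> s \<Longrightarrow> v \<noteq> t \<Longrightarrow> v \<notin> verts ta he A2"
    "\<And>v. v \<in> verts ta he A2 \<Longrightarrow> v \<noteq> s \<Longrightarrow> v \<noteq> t \<Longrightarrow> v \<notin> verts ta he A1"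
proof -
  have I: "verts ta he A1 \<inter> verts ta he A2 = {s, t}" "A1 \<inter> A2 = {}"
    using pc unfolding parallel_comp_def by simp_all
  show "A1 \<inter> A2 = {}" using I by simp
  show "\<And>v. v \<in> verts ta he A1 \<Longrightarrow> v \<noteq> s \<Longrightarrow> v \<noteq> t \<Longrightarrow> v \<notin> verts ta he A2" using I(1) by blast
  show "\<And>v. v \<in> verts ta he A2 \<Longrightarrow> v \<noteq> s \<Longrightarrow> v \<noteq> t \<Longrightarrow> v \<notin> verts ta he A1" using I(1) by blast
qed

lemma verts_union: "verts ta he (A \<union> B) = verts ta he A \<union> verts ta he B"
  unfolding verts_def by auto

lemma ser_restrict:
  assumes H1: "sp ta he A1 s1 t1" and H2: "sp ta he A2 s2 t2"
    and sc: "series_comp ta he A1 s1 t1 A2 s2 t2"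
    and C: "cons ta he (A1 \<union> A2) s1 t2 f"
  shows "cons ta he A1 s1 t1 f" "cons ta he A2 s2 t2 f"
    "fsum ta (A1 \<union> A2) s1 f = fsum ta A1 s1 f"
    "fsum ta A2 s2 f = fsum he A1 t1 f"
    "fsum he (A1 \<union> A2) t2 f = fsum he A2 t2 f"
proof -
  note F = ser_facts[OF H1 H2 sc]
  note S1 = sp_struct[OF H1] and S2 = sp_struct[OF H2]
  have fin: "finite A1" "finite A2" using S1 S2 by simp_all
  note U = fsum_union[OF fin F(1)]
  show "cons ta he A1 s1 t1 f" unfolding cons_def
  proof (intro ballI impI)
    fix v assume v: "v \<in> verts ta he A1" "v \<noteq> s1" "v \<noteq> t1"
    have v2: "v \<notin> verts ta he A2" using F(5) v by simp
    have "v \<noteq> t2" using v2 S2 by auto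
    then have "fsum ta (A1 \<union> A2) v f = fsum he (A1 \<union> A2) v f"
      using C v unfolding cons_def verts_union by simp
    then show "fsum ta A1 v f = fsum he A1 v f"
      by (simp add: U fsum_tail_notin[OF v2] fsum_head_notin[OF v2])
  qed
  show "cons ta he A2 s2 t2 f" unfolding cons_def
  proof (intro ballI impI)
    fix v assume v: "v \<in> verts ta he A2" "v \<noteq> s2" "v \<noteq> t2"
    have v2: "v \<notin> verts ta he A1" using F(6,2) v by simp
    have "v \<noteq> s1" using v2 S1 by auto
    then have "fsum ta (A1 \<union> A2) v f = fsum he (A1 \<union> A2) v f"
      using C v unfolding cons_def verts_union by simp
    then show "fsum ta A2 v f = fsum he A2 v f"
      by (simp add: U fsum_tail_notin[OF v2] fsum_head_notin[OF v2])
  qed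
  show "fsum ta (A1 \<union> A2) s1 f = fsum ta A1 s1 f"
    by (simp add: U fsum_tail_notin[OF F(3)])
  show "fsum he (A1 \<union> A2) t2 f = fsum he A2 t2 f"
    by (simp add: U fsum_head_notin[OF F(4)])
  have t1v: "t1 \<in> verts ta he (A1 \<union> A2)" "t1 \<noteq> s1" "t1 \<noteq> t2"
    using S1 S2 F(2) by (auto simp: verts_union)
  have "fsum ta (A1 \<union> A2) t1 f = fsum he (A1 \<union> A2) t1 f"
    using C t1v unfolding cons_def by blast
  moreover have "fsum ta A1 t1 f = 0" using S1 by (intro fsum_empty) simp
  moreover have "fsum he A2 t1 f = 0" using S2 F(2) by (intro fsum_empty) simp
  ultimately show "fsum ta A2 s2 f = fsum he A1 t1 f" using F(2) by (simp add: U)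
qed

lemma ser_combine:
  assumes H1: "sp ta he A1 s1 t1" and H2: "sp ta he A2 s2 t2"
    and sc: "series_comp ta he A1 s1 t1 A2 s2 t2"
    and C1: "cons ta he A1 s1 t1 f" and C2: "cons ta he A2 s2 t2 f"
    and J: "fsum ta A2 s2 f = fsum he A1 t1 f"
  shows "cons ta he (A1 \<union> A2) s1 t2 f"
proof -
  note F = ser_facts[OF H1 H2 sc]
  note S1 = sp_struct[OF H1] and S2 = sp_struct[OF H2]
  have fin: "finite A1" "finite A2" using S1 S2 by simp_all
  note U = fsum_union[OF fin F(1)]
  show ?thesis unfolding cons_def
  proof (intro ballI impI)
    fix v assume v: "v \<in> verts ta he (A1 \<union> A2)" "v \<noteq> s1" "v \<noteq> t2"
    show "fsum ta (A1 \<union> A2) v f = fsum he (A1 \<union> A2) v f"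
    proof (cases "v = t1")
      case True
      moreover have "fsum ta A1 t1 f = 0" using S1 by (intro fsum_empty) simp
      moreover have "fsum he A2 t1 f = 0" using S2 F(2) by (intro fsum_empty) simp
      ultimately show ?thesis using J F(2) by (simp add: U)
    next
      case False
      show ?thesis
      proof (cases "v \<in> verts ta he A1")
        case True
        have v2: "v \<notin> verts ta he A2" using F(5) True False by simp
        then show ?thesis using           C1 True False v unfolding cons_def by (simp add: U fsum_tail_notin[OF v2] fsum_head_notin[OF v2])
      next
        case v2: False
        have "v \<in> verts ta he A2" using v v2 by (simp add: verts_union)
        then show ?thesis using           C2 False v F(2) unfolding cons_def by (simp add: U fsum_tail_notin[OF v2] fsum_head_notin[OF v2])
      qed
    qed
  qed
qed

lemma par_restrict:
  assumes pc: "parallel_comp ta he A1 s t A2 s t"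
    and C: "cons ta he (A1 \<union> A2) s t f" and fin: "finite A1" "finite A2"
  shows "cons ta he A1 s t f" "cons ta he A2 s t f"
proof -
  note F = par_facts[OF pc]
  note U = fsum_union[OF fin F(1)]
  show "cons ta he A1 s t f" unfolding cons_def
  proof (intro ballI impI)
    fix v assume v: "v \<in> verts ta he A1" "v \<noteq> s" "v \<noteq> t"
    have v2: "v \<notin> verts ta he A2" using F(2) v by simp
    have "fsum ta (A1 \<union> A2) v f = fsum he (A1 \<union> A2) v f"
      using C v unfolding cons_def verts_union by simp
    then show "fsum ta A1 v f = fsum he A1 v f"
      by (simp add: U fsum_tail_notin[OF v2] fsum_head_notin[OF v2])
  qed
  show "cons ta he A2 s t f" unfolding cons_def
  proof (intro ballI impI)
    fix v assume v: "v \<in> verts ta he A2" "v \<noteq> s" "v \<noteq> t"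
    have v2: "v \<notin> verts ta he A1" using F(3) v by simp
    have "fsum ta (A1 \<union> A2) v f = fsum he (A1 \<union> A2) v f"
      using C v unfolding cons_def verts_union by simp
    then show "fsum ta A2 v f = fsum he A2 v f"
      by (simp add: U fsum_tail_notin[OF v2] fsum_head_notin[OF v2])
  qed
qed

lemma par_combine:
  assumes pc: "parallel_comp ta he A1 s t A2 s t"
    and C1: "cons ta he A1 s t f" and C2: "cons ta he A2 s t f" and fin: "finite A1" "finite A2"
  shows "cons ta he (A1 \<union> A2) s t f"
proof -
  note F = par_facts[OF pc]
  note U = fsum_union[OF fin F(1)]
  show ?thesis unfolding cons_def
  proof (intro ballI impI)
    fix v assume v: "v \<in> verts ta he (A1 \<union> A2)" "v \<noteq> s" "v \<noteq> t"
    show "fsum ta (A1 \<union> A2) v f = fsum he (A1 \<union> A2) v f"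
    proof (cases "v \<in> verts ta he A1")
      case True
      have v2: "v \<notin> verts ta he A2" using F(2) True v by simp
      then show ?thesis using         C1 True v unfolding cons_def by (simp add: U fsum_tail_notin[OF v2] fsum_head_notin[OF v2])
    next
      case v2: False
      have "v \<in> verts ta he A2" using v v2 by (simp add: verts_union)
      then show ?thesis using         C2 v unfolding cons_def by (simp add: U fsum_tail_notin[OF v2] fsum_head_notin[OF v2])
    qed
  qed
qed

lemma sp_value:
  "sp ta he H s t \<Longrightarrow> cons ta he H s t f \<Longrightarrow> fsum he H t f = fsum ta H s f"
proof (induction arbitrary: f rule: sp.induct)
  case (arc e s t)
  then have "{x\<in>{e}. he x = t} = {e}" "{x\<in>{e}. ta x = s} = {e}" by auto
  then show ?case unfolding fsum_def by simp
next
  case (ser A1 s1 t1 A2 s2 t2)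
  note R = ser_restrict[OF ser.hyps ser.prems]
  show ?case using R ser.IH(1)[OF R(1)] ser.IH(2)[OF R(2)] by simp
next
  case (par A1 s1 t1 A2 s2 t2)
  have e: "s2 = s1" "t2 = t1" using par.hyps(3) by (auto simp: parallel_comp_def)
  have pc: "parallel_comp ta he A1 s1 t1 A2 s1 t1" using par.hyps(3) e by simp
  have fin: "finite A1" "finite A2" using sp_struct[OF par.hyps(1)] sp_struct[OF par.hyps(2)] by simp_all
  note R = par_restrict[OF pc par.prems fin]
  note U = fsum_union[OF fin par_facts(1)[OF pc]]
  show ?case using R par.IH(1)[OF R(1)] par.IH(2) R(2) e by (simp add: U)
qed

lemma cons_cong: "(\<And>e. e \<in> H \<Longrightarrow> f e = g e) \<Longrightarrow> cons ta he H s t f = cons ta he H s t g"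
  unfolding cons_def by (metis (no_types, lifting) fsum_cong)

lemma split_nat:
  fixes a1 a2 b1 b2 w :: nat
  assumes "min (a1 + a2) (b1 + b2) \<le> w" "w \<le> max (a1 + a2) (b1 + b2)"
  shows "\<exists>w1 w2. w = w1 + w2 \<and> min a1 b1 \<le> w1 \<and> w1 \<le> max a1 b1 \<and> min a2 b2 \<le> w2 \<and> w2 \<le> max a2 b2"
proof -
  define w1 where "w1 = min (max a1 b1) (w - min a2 b2)"
  show ?thesis
    apply (rule exI[of _ w1], rule exI[of _ "w - w1"])
    using assms unfolding w1_def by (auto simp: min_def max_def split: if_splits)
qed

lemma sp_ivt:
  "sp ta he H s t \<Longrightarrow> cons ta he H s t \<phi> \<Longrightarrow> cons ta he H s t \<psi> \<Longrightarrow>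
   min (fsum ta H s \<phi>) (fsum ta H s \<psi>) \<le> w \<Longrightarrow> w \<le> max (fsum ta H s \<phi>) (fsum ta H s \<psi>) \<Longrightarrow>
   \<exists>\<chi>. cons ta he H s t \<chi> \<and> fsum ta H s \<chi> = w \<and>
        (\<forall>e\<in>H. min (\<phi> e) (\<psi> e) \<le> \<chi> e \<and> \<chi> e \<le> max (\<phi> e) (\<psi> e))"
proof (induction arbitrary: \<phi> \<psi> w rule: sp.induct)
  case (arc e s t)
  have one: "fsum ta {e} s f = f e" for f
  proof -
    have "{x\<in>{e}. ta x = s} = {e}" using arc by auto
    then show ?thesis unfolding fsum_def by simp
  qed
  have "cons ta he {e} s t (\<lambda>_. w)" unfolding cons_def verts_def using arc by auto
  then show ?case using arc.prems by (intro exI[of _ "\<lambda>_. w"]) (simp add: one)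
next
  case (ser A1 s1 t1 A2 s2 t2)
  note F = ser_facts[OF ser.hyps]
  note Rp = ser_restrict[OF ser.hyps ser.prems(1)]
  note Rq = ser_restrict[OF ser.hyps ser.prems(2)]
  have vp: "fsum ta A2 s2 \<phi> = fsum ta A1 s1 \<phi>" using Rp(4) sp_value[OF ser.hyps(1) Rp(1)] by simp
  have vq: "fsum ta A2 s2 \<psi> = fsum ta A1 s1 \<psi>" using Rq(4) sp_value[OF ser.hyps(1) Rq(1)] by simp
  obtain \<chi>1 where c1: "cons ta he A1 s1 t1 \<chi>1" "fsum ta A1 s1 \<chi>1 = w"
     "\<forall>e\<in>A1. min (\<phi> e) (\<psi> e) \<le> \<chi>1 e \<and> \<chi>1 e \<le> max (\<phi> e) (\<psi> e)"
    using ser.IH(1)[OF Rp(1) Rq(1)] ser.prems(3,4) Rp(3) Rq(3) by auto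
  obtain \<chi>2 where c2: "cons ta he A2 s2 t2 \<chi>2" "fsum ta A2 s2 \<chi>2 = w"
     "\<forall>e\<in>A2. min (\<phi> e) (\<psi> e) \<le> \<chi>2 e \<and> \<chi>2 e \<le> max (\<phi> e) (\<psi> e)"
    using ser.IH(2)[OF Rp(2) Rq(2)] ser.prems(3,4) Rp(3) Rq(3) vp vq by auto
  define \<chi> where "\<chi> = (\<lambda>e. if e \<in> A1 then \<chi>1 e else \<chi>2 e)"
  have e1: "\<And>e. e \<in> A1 \<Longrightarrow> \<chi> e = \<chi>1 e" unfolding \<chi>_def by simp
  have e2: "\<And>e. e \<in> A2 \<Longrightarrow> \<chi> e = \<chi>2 e" unfolding \<chi>_def using F(1) by auto
  have C1: "cons ta he A1 s1 t1 \<chi>" using c1(1) by (simp add: cons_cong[of A1 \<chi> \<chi>1, OF e1])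
  have C2: "cons ta he A2 s2 t2 \<chi>" using c2(1) by (simp add: cons_cong[of A2 \<chi> \<chi>2, OF e2])
  have J: "fsum ta A2 s2 \<chi> = fsum he A1 t1 \<chi>"
    using sp_value[OF ser.hyps(1) c1(1)] c1(2) c2(2)
    by (simp add: fsum_cong[of A2 \<chi> \<chi>2, OF e2] fsum_cong[of A1 \<chi> \<chi>1, OF e1])
  have C: "cons ta he (A1 \<union> A2) s1 t2 \<chi>" by (rule ser_combine[OF ser.hyps C1 C2 J])
  have V: "fsum ta (A1 \<union> A2) s1 \<chi> = w"
    using ser_restrict(3)[OF ser.hyps C] c1(2) by (simp add: fsum_cong[of A1 \<chi> \<chi>1, OF e1])
  have B: "\<forall>e\<in>A1 \<union> A2. min (\<phi> e) (\<psi> e) \<le> \<chi> e \<and> \<chi> e \<le> max (\<phi> e) (\<psi> e)"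
    using c1(3) c2(3) e1 e2 by auto
  show ?case using C V B by blast
next
  case (par A1 s1 t1 A2 s2 t2)
  have e: "s2 = s1" "t2 = t1" using par.hyps(3) by (auto simp: parallel_comp_def)
  have pc: "parallel_comp ta he A1 s1 t1 A2 s1 t1" using par.hyps(3) e by simp
  have fin: "finite A1" "finite A2" using sp_struct[OF par.hyps(1)] sp_struct[OF par.hyps(2)] by simp_all
  note F = par_facts[OF pc]
  note Rp = par_restrict[OF pc par.prems(1) fin]
  note Rq = par_restrict[OF pc par.prems(2) fin]
  note U = fsum_union[OF fin F(1)]
  obtain w1 w2 where ws: "w = w1 + w2"
    "min (fsum ta A1 s1 \<phi>) (fsum ta A1 s1 \<psi>) \<le> w1" "w1 \<le> max (fsum ta A1 s1 \<phi>) (fsum ta A1 s1 \<psi>)"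
    "min (fsum ta A2 s1 \<phi>) (fsum ta A2 s1 \<psi>) \<le> w2" "w2 \<le> max (fsum ta A2 s1 \<phi>) (fsum ta A2 s1 \<psi>)"
    using split_nat[of "fsum ta A1 s1 \<phi>" "fsum ta A2 s1 \<phi>" "fsum ta A1 s1 \<psi>" "fsum ta A2 s1 \<psi>" w]
      par.prems(3,4) by (auto simp: U)
  obtain \<chi>1 where c1: "cons ta he A1 s1 t1 \<chi>1" "fsum ta A1 s1 \<chi>1 = w1"
     "\<forall>e\<in>A1. min (\<phi> e) (\<psi> e) \<le> \<chi>1 e \<and> \<chi>1 e \<le> max (\<phi> e) (\<psi> e)"
    using par.IH(1)[OF Rp(1) Rq(1) ws(2,3)] by auto
  obtain \<chi>2 where c2: "cons ta he A2 s1 t1 \<chi>2" "fsum ta A2 s1 \<chi>2 = w2"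
     "\<forall>e\<in>A2. min (\<phi> e) (\<psi> e) \<le> \<chi>2 e \<and> \<chi>2 e \<le> max (\<phi> e) (\<psi> e)"
    using par.IH(2)[unfolded e, OF Rp(2) Rq(2) ws(4,5)] by auto
  define \<chi> where "\<chi> = (\<lambda>e. if e \<in> A1 then \<chi>1 e else \<chi>2 e)"
  have e1: "\<And>e. e \<in> A1 \<Longrightarrow> \<chi> e = \<chi>1 e" unfolding \<chi>_def by simp
  have e2: "\<And>e. e \<in> A2 \<Longrightarrow> \<chi> e = \<chi>2 e" unfolding \<chi>_def using F(1) by auto
  have C1: "cons ta he A1 s1 t1 \<chi>" using c1(1) by (simp add: cons_cong[of A1 \<chi> \<chi>1, OF e1])
  have C2: "cons ta he A2 s1 t1 \<chi>" using c2(1) by (simp add: cons_cong[of A2 \<chi> \<chi>2, OF e2])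
  have C: "cons ta he (A1 \<union> A2) s1 t1 \<chi>" by (rule par_combine[OF pc C1 C2 fin])
  have V: "fsum ta (A1 \<union> A2) s1 \<chi> = w"
    using c1(2) c2(2) ws(1)
    by (simp add: U fsum_cong[of A1 \<chi> \<chi>1, OF e1] fsum_cong[of A2 \<chi> \<chi>2, OF e2])
  have B: "\<forall>e\<in>A1 \<union> A2. min (\<phi> e) (\<psi> e) \<le> \<chi> e \<and> \<chi> e \<le> max (\<phi> e) (\<psi> e)"
    using c1(3) c2(3) e1 e2 by auto
  show ?case using C V B by blast
qed

lemma isum: "(\<Sum>e\<in>{e\<in>A. g e = v}. int (f e)) = int (fsum g A v f)"
  by (simp add: fsum_def)

lemma flow_to_cons:
  assumes H: "sp ta he A s t" and F: "is_flow ta he A u (st_balance s t d) f"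
  shows "\<forall>e\<in>A. f e \<le> u e" "cons ta he A s t f" "fsum ta A s f = d"
proof -
  note S = sp_struct[OF H]
  have K: "\<forall>v\<in>verts ta he A. int (fsum ta A v f) - int (fsum he A v f) = st_balance s t d v"
    using F unfolding is_flow_def isum by simp
  show "\<forall>e\<in>A. f e \<le> u e" using F unfolding is_flow_def by simp
  have "fsum he A s f = 0" using S by (intro fsum_empty) simp
  moreover have "int (fsum ta A s f) - int (fsum he A s f) = st_balance s t d s"
    using K S by blast
  ultimately show "fsum ta A s f = d" by (simp add: st_balance_def)
  show "cons ta he A s t f" unfolding cons_def
  proof (intro ballI impI)
    fix v assume v: "v \<in> verts ta he A" "v \<noteq> s" "v \<noteq> t"
    then have "int (fsum ta A v f) - int (fsum he A v f) = st_balance s t d v"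
      using K by blast
    then show "fsum ta A v f = fsum he A v f" using v by (simp add: st_balance_def)
  qed
qed

lemma cons_to_flow:
  assumes H: "sp ta he A s t" and cap: "\<forall>e\<in>A. f e \<le> u e" and C: "cons ta he A s t f"
    and V: "fsum ta A s f = d"
  shows "is_flow ta he A u (st_balance s t d) f"
proof -
  note S = sp_struct[OF H]
  have h0: "fsum he A s f = 0" using S by (intro fsum_empty) simp
  have t0: "fsum ta A t f = 0" using S by (intro fsum_empty) simp
  have tv: "fsum he A t f = d" using sp_value[OF H C] V by simp
  have "\<forall>v\<in>verts ta he A. int (fsum ta A v f) - int (fsum he A v f) = st_balance s t d v"
  proof
    fix v assume v: "v \<in> verts ta he A"
    show "int (fsum ta A v f) - int (fsum he A v f) = st_balance s t d v"
    proof (cases "v = s")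
      case True then show ?thesis using h0 V by (simp add: st_balance_def)
    next
      case False
      show ?thesis
      proof (cases "v = t")
        case True then show ?thesis using False t0 tv by (simp add: st_balance_def)
      next
        case ns: False
        then show ?thesis using False C v unfolding cons_def by (simp add: st_balance_def)
      qed
    qed
  qed
  then show ?thesis using cap unfolding is_flow_def isum by simp
qed

lemma exists_optimal:
  assumes "\<exists>f1 f2. robust_flow ta he A Afix u s t d1 d2 f1 f2"
  shows "\<exists>f1 f2. optimal_robust_flow ta he A Afix u c s t d1 d2 f1 f2"
proof -
  define P where "P n = (\<exists>f1 f2. robust_flow ta he A Afix u s t d1 d2 f1 f2 \<and> robust_cost A c f1 f2 = n)" for n
  obtain f1 f2 where "robust_flow ta he A Afix u s t d1 d2 f1 f2" using assms by blast
  then have "P (robust_cost A c f1 f2)" unfolding P_def by blast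
  then have "P (LEAST n. P n)" by (rule LeastI)
  then obtain g1 g2 where g: "robust_flow ta he A Afix u s t d1 d2 g1 g2"
    "robust_cost A c g1 g2 = (LEAST n. P n)" unfolding P_def by blast
  have "\<forall>h1 h2. robust_flow ta he A Afix u s t d1 d2 h1 h2 \<longrightarrow> robust_cost A c g1 g2 \<le> robust_cost A c h1 h2"
  proof (intro allI impI)
    fix h1 h2 assume "robust_flow ta he A Afix u s t d1 d2 h1 h2"
    then have "P (robust_cost A c h1 h2)" unfolding P_def by blast
    then show "robust_cost A c g1 g2 \<le> robust_cost A c h1 h2" using g(2) by (simp add: Least_le)
  qed
  then show ?thesis using g(1) unfolding optimal_robust_flow_def by blast
qed

lemma better_optimal:
  assumes "optimal_robust_flow ta he A Afix u c s t d1 d2 f1 f2"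
    and "robust_flow ta he A Afix u s t d1 d2 g1 g2"
    and "robust_cost A c g1 g2 \<le> robust_cost A c f1 f2"
  shows "optimal_robust_flow ta he A Afix u c s t d1 d2 g1 g2"
  using assms unfolding optimal_robust_flow_def by (meson order_trans)

lemma core:
  assumes H1: "sp ta he A1 s t" and H2: "sp ta he A2 s t"
    and pc: "parallel_comp ta he A1 s t A2 s t"
    and GA: "A = A1 \<union> A2" and Afix: "Afix \<subseteq> A" and d: "d1 \<le> d2"
    and opt: "optimal_robust_flow ta he A Afix u c s t d1 d2 f1 f2"
    and lt: "fsum ta A1 s f2 < fsum ta A1 s f1"
  shows "\<exists>g1 g2. optimal_robust_flow ta he A Afix u c s t d1 d2 g1 g2
     \<and> fsum ta A1 s g1 \<le> fsum ta A1 s g2 \<and> fsum ta A2 s g1 \<le> fsum ta A2 s g2"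
proof -
  have HA: "sp ta he A s t" using sp.par[OF H1 H2 pc] GA by simp
  have fin: "finite A1" "finite A2" using sp_struct[OF H1] sp_struct[OF H2] by simp_all
  note F = par_facts[OF pc]
  note U = fsum_union[OF fin F(1)]
  note CU = cost_union[OF fin F(1)]
  have rob: "robust_flow ta he A Afix u s t d1 d2 f1 f2" using opt unfolding optimal_robust_flow_def by blast
  have fl1: "is_flow ta he A u (st_balance s t d1) f1" and fl2: "is_flow ta he A u (st_balance s t d2) f2"
    and fx: "\<forall>e\<in>Afix. f1 e = f2 e" using rob unfolding robust_flow_def by auto
  note K1 = flow_to_cons[OF HA fl1] and K2 = flow_to_cons[OF HA fl2]
  have CA1: "cons ta he (A1 \<union> A2) s t f1" "cons ta he (A1 \<union> A2) s t f2" using K1 K2 GA by simp_all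
  note R1 = par_restrict[OF pc CA1(1) fin] and R2 = par_restrict[OF pc CA1(2) fin]
  define x11 where "x11 = fsum ta A1 s f1"
  define x12 where "x12 = fsum ta A1 s f2"
  define x21 where "x21 = fsum ta A2 s f1"
  define x22 where "x22 = fsum ta A2 s f2"
  have s1: "x11 + x21 = d1" using K1(3) GA unfolding x11_def x21_def by (simp add: U)
  have s2: "x12 + x22 = d2" using K2(3) GA unfolding x12_def x22_def by (simp add: U)
  have lt': "x12 < x11" using lt unfolding x11_def x12_def .
  define w where "w = x22 - (x11 - x12)"
  have wb: "x21 \<le> w" "w \<le> x22" "x11 + w = d2" using s1 s2 lt' d unfolding w_def by linarith+
  obtain \<chi> where ch: "cons ta he A2 s t \<chi>" "fsum ta A2 s \<chi> = w"
    "\<forall>e\<in>A2. min (f1 e) (f2 e) \<le> \<chi> e \<and> \<chi> e \<le> max (f1 e) (f2 e)"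
    using sp_ivt[OF H2 R1(2) R2(2), of w] wb unfolding x21_def x22_def by auto
  have capA: "\<forall>e\<in>A. f1 e \<le> u e" "\<forall>e\<in>A. f2 e \<le> u e" using K1(1) K2(1) by auto
  have fixch: "\<And>e. e \<in> Afix \<Longrightarrow> e \<in> A2 \<Longrightarrow> \<chi> e = f1 e" using fx ch(3) by force
  have optle: "robust_cost A c f1 f2 \<le> robust_cost A c g1 g2"
    if "robust_flow ta he A Afix u s t d1 d2 g1 g2" for g1 g2
    using opt that unfolding optimal_robust_flow_def by blast
  show ?thesis
  proof (cases "flow_cost A2 c \<chi> \<le> flow_cost A2 c f1")
    case True
    define g2 where "g2 = (\<lambda>e. if e \<in> A1 then f1 e else \<chi> e)"
    have e1: "\<And>e. e \<in> A1 \<Longrightarrow> g2 e = f1 e" unfolding g2_def by simp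
    have e2: "\<And>e. e \<in> A2 \<Longrightarrow> g2 e = \<chi> e" unfolding g2_def using F(1) by auto
    have C1: "cons ta he A1 s t g2" using R1(1) by (simp add: cons_cong[of A1 g2 f1, OF e1])
    have C2: "cons ta he A2 s t g2" using ch(1) by (simp add: cons_cong[of A2 g2 \<chi>, OF e2])
    have C: "cons ta he A s t g2" using par_combine[OF pc C1 C2 fin] GA by simp
    have v1: "fsum ta A1 s g2 = x11" unfolding x11_def by (simp add: fsum_cong[of A1 g2 f1, OF e1])
    have v2: "fsum ta A2 s g2 = w" using ch(2) by (simp add: fsum_cong[of A2 g2 \<chi>, OF e2])
    have V: "fsum ta A s g2 = d2" using v1 v2 wb GA by (simp add: U)
    have cap: "\<forall>e\<in>A. g2 e \<le> u e"
    proof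
      fix e assume "e \<in> A"
      then show "g2 e \<le> u e"
      proof (cases "e \<in> A1")
        case True then show ?thesis using e1 capA \<open>e \<in> A\<close> by simp
      next
        case False
        then have "e \<in> A2" using \<open>e \<in> A\<close> GA by simp
        then show ?thesis using e2 ch(3) capA \<open>e \<in> A\<close> by (simp add: max_def split: if_splits) fastforce
      qed
    qed
    have fl: "is_flow ta he A u (st_balance s t d2) g2" by (rule cons_to_flow[OF HA cap C V])
    have fx2: "\<forall>e\<in>Afix. f1 e = g2 e"
    proof
      fix e assume "e \<in> Afix"
      then have "e \<in> A1 \<or> e \<in> A2" using Afix GA by auto
      then show "f1 e = g2 e" using e1 e2 fixch \<open>e \<in> Afix\<close> by auto
    qed
    have R: "robust_flow ta he A Afix u s t d1 d2 f1 g2" using fl1 fl fx2 unfolding robust_flow_def by simp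
    have "flow_cost A c g2 = flow_cost A1 c f1 + flow_cost A2 c \<chi>"
      using GA CU by (simp add: cost_cong[of A1 g2 f1, OF e1] cost_cong[of A2 g2 \<chi>, OF e2])
    also have "\<dots> \<le> flow_cost A c f1" using True GA CU by simp
    finally have "robust_cost A c f1 g2 \<le> robust_cost A c f1 f2" unfolding robust_cost_def by simp
    then have O: "optimal_robust_flow ta he A Afix u c s t d1 d2 f1 g2" by (rule better_optimal[OF opt R])
    have "fsum ta A1 s f1 \<le> fsum ta A1 s g2 \<and> fsum ta A2 s f1 \<le> fsum ta A2 s g2"
      using v1 v2 wb unfolding x11_def x21_def by simp
    then show ?thesis using O by blast
  next
    case False
    define q where "q = (\<lambda>e. f1 e + f2 e - \<chi> e)"
    define g1 where "g1 = (\<lambda>e. if e \<in> A1 then f2 e else q e)"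
    have e1: "\<And>e. e \<in> A1 \<Longrightarrow> g1 e = f2 e" unfolding g1_def by simp
    have e2: "\<And>e. e \<in> A2 \<Longrightarrow> g1 e = q e" unfolding g1_def using F(1) by auto
    have qch: "\<And>e. e \<in> A2 \<Longrightarrow> q e + \<chi> e = f1 e + f2 e"
      unfolding q_def using ch(3) by (fastforce simp: max_def split: if_splits)
    have qb: "\<And>e. e \<in> A2 \<Longrightarrow> q e \<le> max (f1 e) (f2 e)"
      unfolding q_def using ch(3) by (fastforce simp: min_def max_def split: if_splits)
    have Cq: "cons ta he A2 s t q" unfolding cons_def
    proof (intro ballI impI)
      fix v assume v: "v \<in> verts ta he A2" "v \<noteq> s" "v \<noteq> t"
      have a: "fsum ta A2 v q + fsum ta A2 v \<chi> = fsum ta A2 v f1 + fsum ta A2 v f2" by (rule fsum_lin[OF qch])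
      have b: "fsum he A2 v q + fsum he A2 v \<chi> = fsum he A2 v f1 + fsum he A2 v f2" by (rule fsum_lin[OF qch])
      have "fsum ta A2 v \<chi> = fsum he A2 v \<chi>" "fsum ta A2 v f1 = fsum he A2 v f1" "fsum ta A2 v f2 = fsum he A2 v f2"
        using ch(1) R1(2) R2(2) v unfolding cons_def by blast+
      then show "fsum ta A2 v q = fsum he A2 v q" using a b by linarith
    qed
    have vq: "fsum ta A2 s q + w = x21 + x22" using fsum_lin[where H=A2 and a=q and b="\<chi>" and c=f1 and d=f2 and g=ta and v=s, OF qch] ch(2) unfolding x21_def x22_def by simp
    have C1: "cons ta he A1 s t g1" using R2(1) by (simp add: cons_cong[of A1 g1 f2, OF e1])
    have C2: "cons ta he A2 s t g1" using Cq by (simp add: cons_cong[of A2 g1 q, OF e2])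
    have C: "cons ta he A s t g1" using par_combine[OF pc C1 C2 fin] GA by simp
    have v1: "fsum ta A1 s g1 = x12" unfolding x12_def by (simp add: fsum_cong[of A1 g1 f2, OF e1])
    have v2: "fsum ta A2 s g1 = fsum ta A2 s q" by (simp add: fsum_cong[of A2 g1 q, OF e2])
    have V: "fsum ta A s g1 = d1" using v1 v2 vq wb s1 s2 lt' GA unfolding w_def by (simp add: U)
    have cap: "\<forall>e\<in>A. g1 e \<le> u e"
    proof
      fix e assume "e \<in> A"
      then show "g1 e \<le> u e"
      proof (cases "e \<in> A1")
        case True then show ?thesis using e1 capA \<open>e \<in> A\<close> by simp
      next
        case False
        then have "e \<in> A2" using \<open>e \<in> A\<close> GA by simp
        then have "q e \<le> max (f1 e) (f2 e)" "g1 e = q e" using qb e2 by auto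
        moreover have "f1 e \<le> u e" "f2 e \<le> u e" using capA \<open>e \<in> A\<close> by auto
        ultimately show ?thesis by linarith
      qed
    qed
    have fl: "is_flow ta he A u (st_balance s t d1) g1" by (rule cons_to_flow[OF HA cap C V])
    have fx2: "\<forall>e\<in>Afix. g1 e = f2 e"
    proof
      fix e assume ef: "e \<in> Afix"
      then have "e \<in> A1 \<or> e \<in> A2" using Afix GA by auto
      then show "g1 e = f2 e" using e1 e2 fixch[OF ef] fx ef unfolding q_def by auto
    qed
    have R: "robust_flow ta he A Afix u s t d1 d2 g1 f2" using fl fl2 fx2 unfolding robust_flow_def by simp
    have cl: "flow_cost A2 c q + flow_cost A2 c \<chi> = flow_cost A2 c f1 + flow_cost A2 c f2"
      by (rule cost_lin[OF qch])
    have "flow_cost A c g1 = flow_cost A1 c f2 + flow_cost A2 c q"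
      using GA CU by (simp add: cost_cong[of A1 g1 f2, OF e1] cost_cong[of A2 g1 q, OF e2])
    also have "\<dots> \<le> flow_cost A c f2" using False cl GA CU by simp
    finally have "robust_cost A c g1 f2 \<le> robust_cost A c f1 f2" unfolding robust_cost_def by simp
    then have O: "optimal_robust_flow ta he A Afix u c s t d1 d2 g1 f2" by (rule better_optimal[OF opt R])
    have "fsum ta A2 s g1 \<le> x22" using v2 vq wb s1 s2 lt' d unfolding w_def by linarith
    then have "fsum ta A1 s g1 \<le> fsum ta A1 s f2 \<and> fsum ta A2 s g1 \<le> fsum ta A2 s f2"
      using v1 unfolding x22_def x12_def by simp
    then show ?thesis using O by blast
  qed
qed

lemma delta_fsum: "delta ta H sH f = fsum ta H sH f"
  by (simp add: delta_def fsum_def)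

lemma par_sym: "parallel_comp ta he A1 s t A2 s t \<Longrightarrow> parallel_comp ta he A2 s t A1 s t"
  unfolding parallel_comp_def by (simp add: Int_commute)

theorem mainTheorem15:
  fixes tail head :: "'a \<Rightarrow> 'v"
    and A A1 A2 Afix :: "'a set"
    and u c :: "'a \<Rightarrow> nat"
    and s t s1 t1 s2 t2 :: 'v
    and d1 d2 :: nat
  assumes G1: "sp tail head A1 s1 t1"
    and G2: "sp tail head A2 s2 t2"
    and comp: "(series_comp tail head A1 s1 t1 A2 s2 t2 \<and> s = s1 \<and> t = t2)
             \<or> (parallel_comp tail head A1 s1 t1 A2 s2 t2 \<and> s = s1 \<and> t = t1)"
    and GA: "A = A1 \<union> A2"
    and Afix_sub: "Afix \<subseteq> A"
    and d: "d1 \<le> d2"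
    and ex: "\<exists>f1 f2. robust_flow tail head A Afix u s t d1 d2 f1 f2"
  shows "\<exists>f1 f2. optimal_robust_flow tail head A Afix u c s t d1 d2 f1 f2
           \<and> delta tail A1 s1 f2 \<ge> delta tail A1 s1 f1
           \<and> delta tail A2 s2 f2 \<ge> delta tail A2 s2 f1"
proof -
  obtain f1 f2 where opt: "optimal_robust_flow tail head A Afix u c s t d1 d2 f1 f2"
    using exists_optimal[OF ex] by blast
  have rob: "robust_flow tail head A Afix u s t d1 d2 f1 f2" using opt unfolding optimal_robust_flow_def by blast
  have fl1: "is_flow tail head A u (st_balance s t d1) f1" and fl2: "is_flow tail head A u (st_balance s t d2) f2"
    using rob unfolding robust_flow_def by auto
  show ?thesis
  proof (cases "series_comp tail head A1 s1 t1 A2 s2 t2 \<and> s = s1 \<and> t = t2")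
    case True
    then have sc: "series_comp tail head A1 s1 t1 A2 s2 t2" and st: "s = s1" "t = t2" by auto
    have HA: "sp tail head A s t" using sp.ser[OF G1 G2 sc] GA st by simp
    have vals: "fsum tail A1 s1 f = d \<and> fsum tail A2 s2 f = d"
      if "is_flow tail head A u (st_balance s t d) f" for f d
    proof -
      note K = flow_to_cons[OF HA that]
      have C: "cons tail head (A1 \<union> A2) s1 t2 f" using K(2) GA st by simp
      note R = ser_restrict[OF G1 G2 sc C]
      have a: "fsum tail A1 s1 f = d" using R(3) K(3) GA st by simp
      moreover have "fsum tail A2 s2 f = d" using R(4) sp_value[OF G1 R(1)] a by simp
      ultimately show ?thesis by simp
    qed
    show ?thesis unfolding delta_fsum
    proof (intro exI conjI)
      show "optimal_robust_flow tail head A Afix u c s t d1 d2 f1 f2" by (rule opt)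
    qed (use vals[OF fl1] vals[OF fl2] d in auto)
  next
    case False
    then have pc0: "parallel_comp tail head A1 s1 t1 A2 s2 t2" and st: "s = s1" "t = t1" using comp by auto
    have e: "s2 = s1" "t2 = t1" using pc0 by (auto simp: parallel_comp_def)
    have pc: "parallel_comp tail head A1 s t A2 s t" using pc0 e st by simp
    have H1: "sp tail head A1 s t" and H2: "sp tail head A2 s t" using G1 G2 e st by simp_all
    show ?thesis
    proof (cases "fsum tail A1 s f2 < fsum tail A1 s f1")
      case True
      show ?thesis using core[OF H1 H2 pc GA Afix_sub d opt True] e st by (auto simp: delta_fsum)
    next
      case n1: False
      show ?thesis
      proof (cases "fsum tail A2 s f2 < fsum tail A2 s f1")
        case True
        have GA': "A = A2 \<union> A1" using GA by auto
        show ?thesis using core[OF H2 H1 par_sym[OF pc] GA' Afix_sub d opt True] e st by (auto simp: delta_fsum)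
      next
        case False
        then have "fsum tail A1 s1 f1 \<le> fsum tail A1 s1 f2 \<and> fsum tail A2 s2 f1 \<le> fsum tail A2 s2 f2"
          using n1 e st by simp
        then show ?thesis using opt unfolding delta_fsum by blast
      qed
    qed
  qed
qed

end
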